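(* Let $1\le p\le\infty$, $E=\mathcal{L}^p(I)$, and let $F,F',B,B'\subset E$ be nonempty compact sets with bounds $M_F,M_{F'},M_B,M_{B'}$ respectively (e.g. $\|g\|_p\le M_F$ for all $g\in F$). Then for any $f,b\in E$: $d_{\mathcal H}(F,F*_Tb)\le\frac{\Lambda}{1-\Lambda}(M_F+\|b\|_p)$; $d_{\mathcal H}(B,f*_TB)\le\frac{1}{1-\Lambda}(M_B+\|f\|_p)$; $d_{\mathcal H}(F,F*_TB)\le\frac{\Lambda}{1-\Lambda}(M_F+M_B)$; $d_{\mathcal H}(B,F*_TB)\le\frac{1}{1-\Lambda}(M_B+M_F)$; $d_{\mathcal H}(F*_TB,F'*_TB)\le\frac{1}{1-\Lambda}(M_F+M_{F'})$; $d_{\mathcal H}(F*_TB,F*_TB')\le\frac{\Lambda}{1-\Lambda}(M_B+M_{B'})$; $d_{\mathcal H}(F*_TB,F'*_TB')\le\frac{1}{1-\Lambda}\big((M_F+M_{F'})+\Lambda(M_B+M_{B'})\big)$. For $0<p<1$ the same holds when $\|g\|_p$ is interpreted as $\int_I|g|^p\,dx$ and $\Lambda$ is replaced by $\Lambda^p$.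
   Context: Let $N\ge 2$, $I=[x_0,x_N]$, $\Delta: x_0<\dots<x_N$ a partition, $L_n(x)=a_nx+b_n$ affine with $L_n(x_0)=x_{n-1}$, $L_n(x_N)=x_n$, $I_1=[x_0,x_1]$, $I_n=(x_{n-1},x_n]$ for $n\ge2$, and $\alpha=(\alpha_1,\dots,\alpha_N)\in(\mathcal{L}^\infty(I))^N$ with $\Lambda:=\operatorname{ess\,sup}\{|\alpha_n(x)|:x\in I,n=1,\dots,N\}<1$. For $f,b\in\mathcal{L}^p(I)$, $f*_Tb$ is the unique fixed point in $\mathcal{L}^p(I)$ of the contraction $Tg(x):=f(x)+\alpha_n(L_n^{-1}(x))(g-b)(L_n^{-1}(x))$, $x\in I_n$. For sets: $F*_Tb:=\{f*_Tb:f\in F\}$, $f*_TB:=\{f*_Tb:b\in B\}$, $F*_TB:=\{f*_Tb: f\in F, b\in B\}$. $\delta(x,K):=\inf_{y\in K}\|x-y\|_p$ and the Hausdorff distance is $d_{\mathcal H}(H,K):=\max\{\sup_{x\in H}\delta(x,K),\sup_{y\in K}\delta(y,H)\}$. *)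

theory Defs
  imports "HOL-Analysis.Analysis" "HOL-Probability.Essential_Supremum"
begin

(* Functions on I are represented as real => real; L^p membership and the
   (quasi-)norm are defined w.r.t. Lebesgue measure restricted to I. *)

definition Lp_int :: "real set \<Rightarrow> real \<Rightarrow> (real \<Rightarrow> real) \<Rightarrow> ennreal" where
  "Lp_int I q g = (\<integral>\<^sup>+ t. ennreal (\<bar>g t\<bar> powr q) \<partial>(lebesgue_on I))"

(* p :: ennreal, p = top means p = infinity *)
definition in_Lp :: "real set \<Rightarrow> ennreal \<Rightarrow> (real \<Rightarrow> real) \<Rightarrow> bool" where
  "in_Lp I p g \<longleftrightarrow> g \<in> borel_measurable (lebesgue_on I) \<and>
     (if p = top then esssup (lebesgue_on I) (\<lambda>t. ereal \<bar>g t\<bar>) < \<infinity>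
      else Lp_int I (enn2real p) g < top)"

definition pnorm :: "real set \<Rightarrow> ennreal \<Rightarrow> (real \<Rightarrow> real) \<Rightarrow> real" where
  "pnorm I p g =
     (if p = top then real_of_ereal (esssup (lebesgue_on I) (\<lambda>t. ereal \<bar>g t\<bar>))
      else if 1 \<le> p then enn2real (Lp_int I (enn2real p) g) powr (1 / enn2real p)
      else enn2real (Lp_int I (enn2real p) g))"

definition pdist :: "real set \<Rightarrow> ennreal \<Rightarrow> (real \<Rightarrow> real) \<Rightarrow> (real \<Rightarrow> real) \<Rightarrow> real" where
  "pdist I p g h = pnorm I p (\<lambda>t. g t - h t)"

(* compactness in (L^p(I), pdist): sequential compactness *)
definition Lp_compact :: "real set \<Rightarrow> ennreal \<Rightarrow> (real \<Rightarrow> real) set \<Rightarrow> bool" where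
  "Lp_compact I p K \<longleftrightarrow> (\<forall>g\<in>K. in_Lp I p g) \<and>
     (\<forall>s. (\<forall>k::nat. s k \<in> K) \<longrightarrow>
        (\<exists>r g. strict_mono r \<and> g \<in> K \<and> (\<lambda>k. pdist I p (s (r k)) g) \<longlonglongrightarrow> 0))"

(* affine maps L_n with L_n(x_0) = x_{n-1}, L_n(x_N) = x_n, and their inverses *)
definition Lmap :: "(nat \<Rightarrow> real) \<Rightarrow> nat \<Rightarrow> nat \<Rightarrow> real \<Rightarrow> real" where
  "Lmap x N n t = x (n - 1) + (x n - x (n - 1)) / (x N - x 0) * (t - x 0)"

definition Linv :: "(nat \<Rightarrow> real) \<Rightarrow> nat \<Rightarrow> nat \<Rightarrow> real \<Rightarrow> real" where
  "Linv x N n t = x 0 + (x N - x 0) / (x n - x (n - 1)) * (t - x (n - 1))"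

definition piece :: "(nat \<Rightarrow> real) \<Rightarrow> nat \<Rightarrow> real set" where
  "piece x n = (if n = 1 then {x 0..x 1} else {x (n - 1)<..x n})"

definition Top :: "(nat \<Rightarrow> real) \<Rightarrow> nat \<Rightarrow> (nat \<Rightarrow> real \<Rightarrow> real)
    \<Rightarrow> (real \<Rightarrow> real) \<Rightarrow> (real \<Rightarrow> real) \<Rightarrow> (real \<Rightarrow> real) \<Rightarrow> real \<Rightarrow> real" where
  "Top x N \<alpha> f b g t = f t + (\<Sum>n\<in>{1..N}. indicator (piece x n) t *
      (\<alpha> n (Linv x N n t) * (g (Linv x N n t) - b (Linv x N n t))))"

(* f *_T b : the fixed point of T in L^p(I) (equality in L^p = a.e. equality) *)
definition fstar :: "ennreal \<Rightarrow> (nat \<Rightarrow> real) \<Rightarrow> nat \<Rightarrow> (nat \<Rightarrow> real \<Rightarrow> real)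
    \<Rightarrow> (real \<Rightarrow> real) \<Rightarrow> (real \<Rightarrow> real) \<Rightarrow> (real \<Rightarrow> real)" where
  "fstar p x N \<alpha> f b = (SOME g. in_Lp {x 0..x N} p g \<and>
      (AE t in lebesgue_on {x 0..x N}. Top x N \<alpha> f b g t = g t))"

definition Lam :: "(nat \<Rightarrow> real) \<Rightarrow> nat \<Rightarrow> (nat \<Rightarrow> real \<Rightarrow> real) \<Rightarrow> ereal" where
  "Lam x N \<alpha> = esssup (lebesgue_on {x 0..x N}) (\<lambda>t. ereal (Max ((\<lambda>n. \<bar>\<alpha> n t\<bar>) ` {1..N})))"

definition hdist :: "('a \<Rightarrow> 'a \<Rightarrow> real) \<Rightarrow> 'a set \<Rightarrow> 'a set \<Rightarrow> real" where
  "hdist d H K = max (SUP h\<in>H. INF k\<in>K. d h k) (SUP k\<in>K. INF h\<in>H. d h k)"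

end

theory Submission
  imports Defs
begin

lemma convex_pow_ineq:
  fixes q l y1 y2 :: real
  assumes q: "1 \<le> q" and "0 \<le> y1" "0 \<le> y2" "0 \<le> l" "l \<le> 1"
  shows "(l*y1 + (1-l)*y2) powr q \<le> l*y1 powr q + (1-l)*y2 powr q"
proof -
  have aux: "(c*y) powr q \<le> c * y powr q" if "0 \<le> c" "c \<le> 1" "0 \<le> y" for c y
  proof -
    have "(c*y) powr q = c powr q * y powr q" using that by (simp add: powr_mult)
    also have "\<dots> \<le> c powr 1 * y powr q"
      by (intro mult_right_mono powr_mono') (use that q in auto)
    finally show ?thesis using that by simp
  qed
  consider "y1 = 0" | "y2 = 0" | "y1 > 0" "y2 > 0" using assms by linarith
  then show ?thesis
  proof cases
    case 1 then show ?thesis using aux[of "1-l" y2] assms by simp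
  next
    case 2 then show ?thesis using aux[of "l" y1] assms by simp
  next
    case 3
    have "((1 - (1-l)) *\<^sub>R y1 + (1-l) *\<^sub>R y2) powr q \<le> (1 - (1-l)) * y1 powr q + (1-l) * y2 powr q"
      using convex_onD[OF powr_convex[OF q], of "1-l" y1 y2] 3 assms by auto
    then show ?thesis by simp
  qed
qed

lemma mink_point:
  fixes q A B a b :: real
  assumes q: "1 \<le> q" and A: "0 < A" and B: "0 < B" and "0 \<le> a" "0 \<le> b"
  shows "(a+b) powr q \<le> (A+B) powr q * (A/(A+B) * (a powr q / A powr q) + B/(A+B) * (b powr q / B powr q))"
proof -
  have AB: "A + B \<noteq> 0" "A \<noteq> 0" "B \<noteq> 0" using A B by auto
  have 1: "1 - A/(A+B) = B/(A+B)" using AB by (simp add: field_simps)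
  have e: "a + b = (A+B) * (A/(A+B) * (a/A) + (1 - A/(A+B)) * (b/B))"
  proof -
    have "A/(A+B) * (a/A) = a/(A+B)" "B/(A+B) * (b/B) = b/(A+B)" using AB by auto
    then have "(A/(A+B) * (a/A) + B/(A+B) * (b/B)) = (a+b)/(A+B)" by (simp add: add_divide_distrib)
    then show ?thesis unfolding 1 using AB by simp
  qed
  have "(a+b) powr q = (A+B) powr q * (A/(A+B) * (a/A) + (1 - A/(A+B)) * (b/B)) powr q"
  proof -
    have "0 \<le> (A/(A+B) * (a/A) + (1 - A/(A+B)) * (b/B))" unfolding 1 using A B assms by auto
    then show ?thesis by (subst e, subst powr_mult) (use A B in auto)
  qed
  also have "\<dots> \<le> (A+B) powr q * (A/(A+B) * (a/A) powr q + (1 - A/(A+B)) * (b/B) powr q)"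
    by (intro mult_left_mono convex_pow_ineq) (use A B assms in auto)
  also have "1 - A/(A+B) = B/(A+B)" using A B by (simp add: field_simps)
  finally show ?thesis using A B assms by (simp add: powr_divide)
qed

lemma sub_point:
  fixes q a b :: real
  assumes q: "0 < q" "q \<le> 1" and "0 \<le> a" "0 \<le> b"
  shows "(a+b) powr q \<le> a powr q + b powr q"
proof (cases "a + b = 0")
  case True then show ?thesis using assms by simp
next
  case False
  let ?s = "a+b"
  have s: "?s > 0" using False assms by simp
  have k: "y \<le> y powr q" if "0 \<le> y" "y \<le> 1" for y
    using powr_mono'[of q 1 y] that q by simp
  have "a powr q = ?s powr q * (a/?s) powr q" using s assms by (simp add: powr_divide)
  moreover have "b powr q = ?s powr q * (b/?s) powr q" using s assms by (simp add: powr_divide)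
  moreover have "a/?s \<le> (a/?s) powr q" by (rule k) (use s assms in auto)
  moreover have "b/?s \<le> (b/?s) powr q" by (rule k) (use s assms in auto)
  ultimately have "a powr q + b powr q \<ge> ?s powr q * (a/?s + b/?s)"
    by (smt (verit) distrib_left mult_left_mono powr_ge_zero)
  also have "a/?s + b/?s = 1" using s by (simp add: add_divide_distrib[symmetric])
  finally show ?thesis by simp
qed

definition Phi :: "'a measure \<Rightarrow> real \<Rightarrow> ('a \<Rightarrow> real) \<Rightarrow> ennreal" where
  "Phi M q u = (\<integral>\<^sup>+ t. ennreal (\<bar>u t\<bar> powr q) \<partial>M)"

lemma Phi_zero_AE:
  assumes [measurable]: "u \<in> borel_measurable M" and "Phi M q u = 0"
  shows "AE t in M. u t = 0"
proof -
  have "AE t in M. ennreal (\<bar>u t\<bar> powr q) = 0"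
    using assms(2) unfolding Phi_def by (subst nn_integral_0_iff_AE[symmetric]) auto
  then show ?thesis by eventually_elim (simp add: ennreal_eq_0_iff)
qed

lemma Phi_cong_AE:
  assumes "AE t in M. u t = v t"
  shows "Phi M q u = Phi M q v"
  unfolding Phi_def by (rule nn_integral_cong_AE) (use assms in auto)

lemma Phi_finite_eq:
  assumes "Phi M q u < \<infinity>" "0 < q"
  shows "Phi M q u = ennreal ((enn2real (Phi M q u) powr (1/q)) powr q)"
proof -
  have "(enn2real (Phi M q u) powr (1/q)) powr q = enn2real (Phi M q u)"
    using assms by (simp add: powr_powr)
  then show ?thesis using assms by (simp add: ennreal_enn2real_if)
qed

lemma mink:
  fixes q :: real
  assumes q: "1 \<le> q" and [measurable]: "u \<in> borel_measurable M" "v \<in> borel_measurable M"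
    and fu: "Phi M q u < \<infinity>" and fv: "Phi M q v < \<infinity>"
  shows "Phi M q (\<lambda>t. u t + v t) < \<infinity> \<and>
    enn2real (Phi M q (\<lambda>t. u t + v t)) powr (1/q)
      \<le> enn2real (Phi M q u) powr (1/q) + enn2real (Phi M q v) powr (1/q)"
proof -
  define A where "A = enn2real (Phi M q u) powr (1/q)"
  define B where "B = enn2real (Phi M q v) powr (1/q)"
  have A0: "A \<ge> 0" "B \<ge> 0" unfolding A_def B_def by auto
  have PA: "Phi M q u = ennreal (A powr q)" unfolding A_def by (rule Phi_finite_eq[OF fu]) (use q in simp)
  have PB: "Phi M q v = ennreal (B powr q)" unfolding B_def by (rule Phi_finite_eq[OF fv]) (use q in simp)
  consider "A = 0" | "B = 0" | "A > 0" "B > 0" using A0 by linarith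
  then show ?thesis
  proof cases
    case 1
    then have "Phi M q u = 0" using PA q by simp
    then have "AE t in M. u t = 0" by (intro Phi_zero_AE) auto
    then have "Phi M q (\<lambda>t. u t + v t) = Phi M q v" by (intro Phi_cong_AE) auto
    then show ?thesis using fv 1 by (simp add: A_def B_def)
  next
    case 2
    then have "Phi M q v = 0" using PB q by simp
    then have "AE t in M. v t = 0" by (intro Phi_zero_AE) auto
    then have "Phi M q (\<lambda>t. u t + v t) = Phi M q u" by (intro Phi_cong_AE) auto
    then show ?thesis using fu 2 by (simp add: A_def B_def)
  next
    case 3
    define K1 where "K1 = (A+B) powr q * (A/(A+B)) / A powr q"
    define K2 where "K2 = (A+B) powr q * (B/(A+B)) / B powr q"
    have K: "K1 \<ge> 0" "K2 \<ge> 0" unfolding K1_def K2_def using 3 by auto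
    have pt: "ennreal (\<bar>u t + v t\<bar> powr q) \<le> ennreal K1 * ennreal (\<bar>u t\<bar> powr q) + ennreal K2 * ennreal (\<bar>v t\<bar> powr q)" for t
    proof -
      have "\<bar>u t + v t\<bar> powr q \<le> (\<bar>u t\<bar> + \<bar>v t\<bar>) powr q"
        by (rule powr_mono2) (use q in auto)
      also have "\<dots> \<le> (A+B) powr q * (A/(A+B) * (\<bar>u t\<bar> powr q / A powr q) + B/(A+B) * (\<bar>v t\<bar> powr q / B powr q))"
        by (rule mink_point) (use q 3 in auto)
      also have "\<dots> = K1 * \<bar>u t\<bar> powr q + K2 * \<bar>v t\<bar> powr q"
        unfolding K1_def K2_def by (simp add: field_simps)
      finally show ?thesis using K by (simp add: ennreal_mult[symmetric] ennreal_plus[symmetric] del: ennreal_plus)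
    qed
    have "Phi M q (\<lambda>t. u t + v t) \<le> (\<integral>\<^sup>+ t. ennreal K1 * ennreal (\<bar>u t\<bar> powr q) + ennreal K2 * ennreal (\<bar>v t\<bar> powr q) \<partial>M)"
      unfolding Phi_def by (rule nn_integral_mono) (rule pt)
    also have "\<dots> = ennreal K1 * Phi M q u + ennreal K2 * Phi M q v"
      unfolding Phi_def by (simp add: nn_integral_add nn_integral_cmult)
    also have "\<dots> = ennreal (K1 * A powr q + K2 * B powr q)"
      using K by (simp add: PA PB ennreal_mult[symmetric] ennreal_plus[symmetric] del: ennreal_plus)
    also have "K1 * A powr q + K2 * B powr q = (A+B) powr q"
    proof -
      have "K1 * A powr q = (A+B) powr q * (A/(A+B))" unfolding K1_def using 3 by simp
      moreover have "K2 * B powr q = (A+B) powr q * (B/(A+B))" unfolding K2_def using 3 by simp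
      moreover have "A/(A+B) + B/(A+B) = 1" using 3 by (simp add: add_divide_distrib[symmetric])
      ultimately show ?thesis by (metis distrib_left mult.right_neutral)
    qed
    finally have le: "Phi M q (\<lambda>t. u t + v t) \<le> ennreal ((A+B) powr q)" .
    then have fin: "Phi M q (\<lambda>t. u t + v t) < \<infinity>" using le_less_trans by fastforce
    have e2: "enn2real (Phi M q (\<lambda>t. u t + v t)) \<le> (A+B) powr q"
      using le by (simp add: enn2real_leI)
    have "enn2real (Phi M q (\<lambda>t. u t + v t)) powr (1/q) \<le> ((A+B) powr q) powr (1/q)"
      by (rule powr_mono2) (use q e2 in auto)
    also have "\<dots> = A + B" using q 3 by (simp add: powr_powr)
    finally show ?thesis using fin by (simp add: A_def B_def)
  qed
qed

lemma subadd_Phi: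
  fixes q :: real
  assumes q: "0 < q" "q \<le> 1" and [measurable]: "u \<in> borel_measurable M" "v \<in> borel_measurable M"
  shows "Phi M q (\<lambda>t. u t + v t) \<le> Phi M q u + Phi M q v"
proof -
  have "Phi M q (\<lambda>t. u t + v t) \<le> (\<integral>\<^sup>+ t. ennreal (\<bar>u t\<bar> powr q) + ennreal (\<bar>v t\<bar> powr q) \<partial>M)"
    unfolding Phi_def
  proof (rule nn_integral_mono)
    fix t
    have "\<bar>u t + v t\<bar> powr q \<le> (\<bar>u t\<bar> + \<bar>v t\<bar>) powr q"
      by (rule powr_mono2) (use q in auto)
    also have "\<dots> \<le> \<bar>u t\<bar> powr q + \<bar>v t\<bar> powr q" by (rule sub_point) (use q in auto)
    finally show "ennreal (\<bar>u t + v t\<bar> powr q) \<le> ennreal (\<bar>u t\<bar> powr q) + ennreal (\<bar>v t\<bar> powr q)"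
      by (simp add: ennreal_plus[symmetric] del: ennreal_plus)
  qed
  also have "\<dots> = Phi M q u + Phi M q v" unfolding Phi_def by (simp add: nn_integral_add)
  finally show ?thesis .
qed

lemma Lp_int_Phi: "Lp_int I q g = Phi (lebesgue_on I) q g"
  unfolding Lp_int_def Phi_def ..

locale lpsp =
  fixes I :: "real set" and p :: ennreal
  assumes pos: "emeasure (lebesgue_on I) (space (lebesgue_on I)) \<noteq> 0"
    and ppos: "0 < p"
begin

abbreviation "M \<equiv> lebesgue_on I"
abbreviation "E u \<equiv> esssup M (\<lambda>t. ereal \<bar>u t\<bar>)"
abbreviation "q \<equiv> enn2real p"

lemma q_pos: "p \<noteq> top \<Longrightarrow> 0 < q"
  using ppos by (cases p) auto

lemma one_le_p: "p \<noteq> top \<Longrightarrow> 1 \<le> p \<longleftrightarrow> 1 \<le> q"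
  by (cases p) auto

lemma E_nonneg: "0 \<le> E u"
proof -
  have "esssup M (\<lambda>t. (0::ereal)) \<le> E u" by (rule esssup_mono) auto
  then show ?thesis using esssup_const[OF pos, of "0::ereal"] by simp
qed

lemma E_fin: "E u < \<infinity> \<Longrightarrow> E u = ereal (real_of_ereal (E u))"
  using E_nonneg[of u] by (cases "E u") auto

lemma pnorm_nonneg: "0 \<le> pnorm I p u"
  unfolding pnorm_def using E_nonneg[of u] by (auto simp: real_of_ereal_pos)

lemma pnorm_top: "p = top \<Longrightarrow> pnorm I p u = real_of_ereal (E u)"
  unfolding pnorm_def by simp

lemma pnorm_neg: "pnorm I p (\<lambda>t. - u t) = pnorm I p u"
  unfolding pnorm_def Lp_int_def by simp

lemma in_Lp_neg: "in_Lp I p u \<Longrightarrow> in_Lp I p (\<lambda>t. - u t)"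
  unfolding in_Lp_def Lp_int_def by auto

lemma pnorm_zero: "pnorm I p (\<lambda>t. 0) = 0"
  unfolding pnorm_def Lp_int_def using esssup_const[OF pos, of "0::ereal"] ppos
  by (auto simp: zero_ereal_def)

lemma in_Lp_zero: "in_Lp I p (\<lambda>t. 0)"
  unfolding in_Lp_def Lp_int_def using esssup_const[OF pos, of "0::ereal"] ppos
  by (auto simp: zero_ereal_def)

lemma in_Lp_meas: "in_Lp I p u \<Longrightarrow> u \<in> borel_measurable M"
  unfolding in_Lp_def by simp

lemma E_AE: "in_Lp I p u \<Longrightarrow> p = top \<Longrightarrow> AE t in M. \<bar>u t\<bar> \<le> pnorm I p u"
proof -
  assume a: "in_Lp I p u" "p = top"
  then have "E u < \<infinity>" unfolding in_Lp_def by simp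
  then have e: "E u = ereal (pnorm I p u)" using E_fin pnorm_top a by simp
  show ?thesis using esssup_AE[of "\<lambda>t. ereal \<bar>u t\<bar>" M] unfolding e
    by eventually_elim simp
qed

lemma top_dom:
  assumes "p = top" "u \<in> borel_measurable M" "AE t in M. \<bar>u t\<bar> \<le> C"
  shows "in_Lp I p u \<and> pnorm I p u \<le> C"
proof -
  have "E u \<le> ereal C" using assms by (intro esssup_I) auto
  then have "E u < \<infinity> \<and> real_of_ereal (E u) \<le> C" using E_nonneg[of u] by (cases "E u") auto
  then show ?thesis using assms unfolding in_Lp_def pnorm_def by simp
qed

lemma fin_Phi_eq:
  assumes "in_Lp I p u" "p \<noteq> top"
  shows "Phi M q u = ennreal (if 1 \<le> p then pnorm I p u powr q else pnorm I p u)"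
proof -
  have f: "Phi M q u < \<infinity>" using assms unfolding in_Lp_def Lp_int_Phi by simp
  show ?thesis
  proof (cases "1 \<le> p")
    case True
    then show ?thesis using Phi_finite_eq[OF f q_pos[OF assms(2)]] assms(2)
      unfolding pnorm_def Lp_int_Phi by simp
  next
    case False
    then show ?thesis using f assms(2) unfolding pnorm_def Lp_int_Phi
      by (simp add: ennreal_enn2real_if)
  qed
qed

lemma fin_dom:
  assumes "p \<noteq> top" "u \<in> borel_measurable M" "Phi M q u \<le> ennreal R"
  shows "in_Lp I p u"
  using assms unfolding in_Lp_def Lp_int_Phi
  by (simp add: le_less_trans)

lemma cong_AE:
  assumes "in_Lp I p u" "v \<in> borel_measurable M" "AE t in M. v t = u t"
  shows "in_Lp I p v \<and> pnorm I p v = pnorm I p u"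
proof (cases "p = top")
  case True
  have "E v = E u" using assms in_Lp_meas[OF assms(1)]
    by (intro esssup_AE_cong) auto
  then show ?thesis using assms True unfolding in_Lp_def pnorm_def by simp
next
  case False
  have "Phi M q v = Phi M q u" by (rule Phi_cong_AE) (use assms in auto)
  then show ?thesis using assms False unfolding in_Lp_def pnorm_def Lp_int_Phi by simp
qed

lemma triangle:
  assumes u: "in_Lp I p u" and v: "in_Lp I p v"
  shows "in_Lp I p (\<lambda>t. u t + v t) \<and> pnorm I p (\<lambda>t. u t + v t) \<le> pnorm I p u + pnorm I p v"
proof -
  have [measurable]: "u \<in> borel_measurable M" "v \<in> borel_measurable M"
    using u v by (auto simp: in_Lp_def)
  show ?thesis
  proof (cases "p = top")
    case True
    have ae: "AE t in M. \<bar>u t + v t\<bar> \<le> pnorm I p u + pnorm I p v"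
      using E_AE[OF u True] E_AE[OF v True] by eventually_elim (rule order_trans[OF abs_triangle_ineq add_mono])
    have m: "(\<lambda>t. u t + v t) \<in> borel_measurable M" by measurable
    show ?thesis using top_dom[OF True m ae] .
  next
    case False
    have fu: "Phi M q u < \<infinity>" "Phi M q v < \<infinity>" using u v False unfolding in_Lp_def Lp_int_Phi by auto
    show ?thesis
    proof (cases "1 \<le> p")
      case True
      then have q1: "1 \<le> q" using one_le_p False by simp
      have mk: "Phi M q (\<lambda>t. u t + v t) < \<infinity> \<and>
    enn2real (Phi M q (\<lambda>t. u t + v t)) powr (1/q)
      \<le> enn2real (Phi M q u) powr (1/q) + enn2real (Phi M q v) powr (1/q)"
        by (rule mink[OF q1 _ _ fu]) auto
      have m: "(\<lambda>t. u t + v t) \<in> borel_measurable M" by measurable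
      show ?thesis using mk m False True
        unfolding in_Lp_def pnorm_def Lp_int_Phi by simp
    next
      case F2: False
      then have q1: "q \<le> 1" using one_le_p[OF False] by simp
      have le: "Phi M q (\<lambda>t. u t + v t) \<le> Phi M q u + Phi M q v"
        by (rule subadd_Phi) (use q1 q_pos[OF False] in auto)
      then have fin: "Phi M q (\<lambda>t. u t + v t) < \<infinity>" using fu
        by (metis ennreal_add_eq_top infinity_ennreal_def le_less_trans top.not_eq_extremum)
      have "enn2real (Phi M q (\<lambda>t. u t + v t)) \<le> enn2real (Phi M q u) + enn2real (Phi M q v)"
      proof -
        have "enn2real (Phi M q (\<lambda>t. u t + v t)) \<le> enn2real (Phi M q u + Phi M q v)"
          using le fu by (intro enn2real_mono) (auto simp: ennreal_add_eq_top)
        also have "\<dots> = enn2real (Phi M q u) + enn2real (Phi M q v)"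
          using fu by (intro enn2real_plus) auto
        finally show ?thesis .
      qed
      moreover have m: "(\<lambda>t. u t + v t) \<in> borel_measurable M" by measurable
      ultimately show ?thesis using fin False F2 unfolding in_Lp_def pnorm_def Lp_int_Phi by simp
    qed
  qed
qed

lemma triangle_sub:
  assumes u: "in_Lp I p u" and v: "in_Lp I p v"
  shows "in_Lp I p (\<lambda>t. u t - v t) \<and> pnorm I p (\<lambda>t. u t - v t) \<le> pnorm I p u + pnorm I p v"
  using triangle[OF u in_Lp_neg[OF v]] pnorm_neg[of v] by simp

end

locale setting =
  fixes x :: "nat \<Rightarrow> real" and N :: nat and \<alpha> :: "nat \<Rightarrow> real \<Rightarrow> real" and p :: ennreal
  assumes N2: "2 \<le> N" and xmono: "strict_mono_on {0..N} x"
    and \<alpha>m: "\<forall>n\<in>{1..N}. \<alpha> n \<in> borel_measurable (lebesgue_on {x 0..x N})"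
    and Lam1: "Lam x N \<alpha> < 1"
    and ppos': "0 < p"
begin

abbreviation "I \<equiv> {x 0..x N}"
abbreviation "P n \<equiv> piece x n"
abbreviation "L n \<equiv> Linv x N n"

definition Sop :: "(real \<Rightarrow> real) \<Rightarrow> real \<Rightarrow> real" where
  "Sop u t = (\<Sum>n\<in>{1..N}. indicator (piece x n) t * (\<alpha> n (Linv x N n t) * u (Linv x N n t)))"

definition r :: "nat \<Rightarrow> real" where
  "r n = (x n - x (n - 1)) / (x N - x 0)"

lemma xlt: "n \<in> {1..N} \<Longrightarrow> x (n - 1) < x n"
  by (rule strict_mono_onD[OF xmono]) auto

lemma xle: "i \<le> j \<Longrightarrow> j \<le> N \<Longrightarrow> x i \<le> x j"
  by (rule strict_mono_on_leD[OF xmono]) auto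

lemma x0N: "x 0 < x N"
  by (rule strict_mono_onD[OF xmono]) (use N2 in auto)

lemma r_pos: "n \<in> {1..N} \<Longrightarrow> 0 < r n"
  unfolding r_def using xlt x0N by auto

lemma sum_r: "(\<Sum>n\<in>{1..N}. r n) = 1"
proof -
  have "(\<Sum>n\<in>{1..N}. x n - x (n - 1)) = x N - x 0"
  proof -
    have "\<And>m. (\<Sum>n\<in>{1..m}. x n - x (n - 1)) = x m - x 0"
    proof -
      fix m show "(\<Sum>n\<in>{1..m}. x n - x (n - 1)) = x m - x 0"
        by (induction m) auto
    qed
    then show ?thesis .
  qed
  then show ?thesis unfolding r_def using x0N by (simp add: sum_divide_distrib[symmetric])
qed

lemma piece_sub: "n \<in> {1..N} \<Longrightarrow> P n \<subseteq> {x (n - 1)..x n}"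
  unfolding piece_def by auto

lemma piece_subI: "n \<in> {1..N} \<Longrightarrow> P n \<subseteq> I"
proof -
  assume n: "n \<in> {1..N}"
  have "x 0 \<le> x (n - 1)" "x n \<le> x N" using n by (auto intro!: xle)
  then show ?thesis using piece_sub[OF n] by auto
qed

lemma Linv_in: assumes n: "n \<in> {1..N}" and t: "t \<in> P n" shows "L n t \<in> I"
proof -
  define d where "d = x n - x (n - 1)"
  define D where "D = x N - x 0"
  have d: "0 < d" "0 < D" unfolding d_def D_def using xlt[OF n] x0N by auto
  have t1: "0 \<le> t - x (n - 1)" "t - x (n - 1) \<le> d" using piece_sub[OF n] t unfolding d_def by auto
  have "0 \<le> D / d * (t - x (n - 1))" using d t1 by auto
  moreover have "D / d * (t - x (n - 1)) \<le> D / d * d" using d t1 by (intro mult_left_mono) auto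
  moreover have "L n t = x 0 + D / d * (t - x (n - 1))" unfolding Linv_def D_def d_def by simp
  moreover have "x N = x 0 + D" unfolding D_def by simp
  ultimately show ?thesis using d by auto
qed

lemma piece_disj: assumes "n \<in> {1..N}" "m \<in> {1..N}" "n \<noteq> m" "t \<in> P n" shows "t \<notin> P m"
proof -
  have *: "t \<notin> P m" if "n < m" "t \<in> P n" "n \<in> {1..N}" "m \<in> {1..N}" for n m
  proof
    assume tm: "t \<in> P m"
    have "x n \<le> x (m - 1)" using that by (intro xle) auto
    moreover have "t \<le> x n" using piece_sub[OF that(3)] that by auto
    moreover have "x (m - 1) < t" using tm that unfolding piece_def by (auto split: if_splits)
    ultimately show False by linarith
  qed
  show ?thesis
  proof (cases "n < m")
    case True then show ?thesis using * assms by auto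
  next
    case False
    then have "m < n" using assms by auto
    then show ?thesis using *[of m n] assms by auto
  qed
qed

lemma sum_single:
  fixes F :: "nat \<Rightarrow> 'a::semiring_1"
  assumes "m \<in> {1..N}" "t \<in> P m"
  shows "(\<Sum>n\<in>{1..N}. indicator (P n) t * F n) = F m"
proof -
  have "(\<Sum>n\<in>{1..N}. indicator (P n) t * F n) = indicator (P m) t * F m + (\<Sum>n\<in>{1..N} - {m}. indicator (P n) t * F n)"
    using assms by (subst sum.remove) auto
  also have "(\<Sum>n\<in>{1..N} - {m}. indicator (P n) t * F n) = 0"
    using piece_disj[OF assms(1) _ _ assms(2)] by (intro sum.neutral) (auto simp: indicator_def)
  finally show ?thesis using assms by simp
qed

lemma sum_none:
  fixes F :: "nat \<Rightarrow> 'a::semiring_1"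
  assumes "\<forall>m\<in>{1..N}. t \<notin> P m"
  shows "(\<Sum>n\<in>{1..N}. indicator (P n) t * F n) = 0"
  using assms by (intro sum.neutral) auto

lemma Linv_affine: "n \<in> {1..N} \<Longrightarrow> L n = (\<lambda>t. (x 0 - (x N - x 0) / (x n - x (n - 1)) * x (n - 1)) + (x N - x 0) / (x n - x (n - 1)) * t)"
  unfolding Linv_def by (auto simp: fun_eq_iff right_diff_distrib)

lemma comp_meas:
  assumes n: "n \<in> {1..N}" and w: "w \<in> borel_measurable lebesgue"
  shows "(\<lambda>t. w (L n t)) \<in> borel_measurable lebesgue"
proof -
  define c where "c = (x N - x 0) / (x n - x (n - 1))"
  define c0 where "c0 = x 0 - (x N - x 0) / (x n - x (n - 1)) * x (n - 1)"
  have c: "c \<noteq> 0" unfolding c_def using xlt[OF n] x0N by auto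
  have "(\<lambda>y::real. c0 + (\<Sum>j\<in>Basis. (c * (y \<bullet> j)) *\<^sub>R j)) \<in> lebesgue \<rightarrow>\<^sub>M lebesgue"
    using lebesgue_affine_measurable[where c="\<lambda>_. c" and t=c0] c by simp
  then have "(\<lambda>y::real. c0 + c * y) \<in> lebesgue \<rightarrow>\<^sub>M lebesgue" by simp
  then have "L n \<in> lebesgue \<rightarrow>\<^sub>M lebesgue" unfolding Linv_affine[OF n] c_def c0_def .
  from measurable_compose[OF this w] show ?thesis by (simp add: comp_def)
qed

lemma piece_sets: "P n \<in> sets lebesgue"
  unfolding piece_def by auto

lemma MC:
  fixes w :: "real \<Rightarrow> real"
  assumes n: "n \<in> {1..N}" and w: "w \<in> borel_measurable (lebesgue_on I)"
  shows "(\<lambda>t. indicator (P n) t * w (L n t)) \<in> borel_measurable (lebesgue_on I)"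
proof -
  have "(\<lambda>s. indicator I s *\<^sub>R w s) \<in> borel_measurable lebesgue"
    using w by (subst borel_measurable_restrict_space_iff[symmetric]) auto
  then have "(\<lambda>t. (\<lambda>s. indicator I s *\<^sub>R w s) (L n t)) \<in> borel_measurable lebesgue"
    by (rule comp_meas[OF n])
  then have "(\<lambda>t. indicator (P n) t * (indicator I (L n t) *\<^sub>R w (L n t))) \<in> borel_measurable lebesgue"
    using piece_sets by (intro borel_measurable_times) auto
  then have "(\<lambda>t. indicator (P n) t * (indicator I (L n t) *\<^sub>R w (L n t))) \<in> borel_measurable (lebesgue_on I)"
    by (rule measurable_restrict_space1)
  moreover have "(\<lambda>t. indicator (P n) t * (indicator I (L n t) *\<^sub>R w (L n t))) = (\<lambda>t. indicator (P n) t * w (L n t))"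
  proof (rule ext)
    fix t show "indicator (P n) t * (indicator I (L n t) *\<^sub>R w (L n t)) = indicator (P n) t * w (L n t)"
      using Linv_in[OF n, of t] by (cases "t \<in> P n") auto
  qed
  ultimately show ?thesis by simp
qed

lemma MCe:
  fixes w :: "real \<Rightarrow> ennreal"
  assumes n: "n \<in> {1..N}" and w: "w \<in> borel_measurable (lebesgue_on I)"
  shows "(\<lambda>t. indicator (P n) t * w (L n t)) \<in> borel_measurable (lebesgue_on I)"
proof -
  have "(\<lambda>s. w s * indicator I s) \<in> borel_measurable lebesgue"
    using w by (subst borel_measurable_restrict_space_iff_ennreal[symmetric]) auto
  then have h1: "(\<lambda>t. (\<lambda>s. w s * indicator I s) (L n t)) \<in> borel_measurable lebesgue"
    by (rule comp_meas[OF n])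
  have "(\<lambda>t. indicator (P n) t * (w (L n t) * indicator I (L n t))) \<in> borel_measurable lebesgue"
    using borel_measurable_times_ennreal[OF borel_measurable_indicator[OF piece_sets] h1] by simp
  then have "(\<lambda>t. indicator (P n) t * (w (L n t) * indicator I (L n t))) \<in> borel_measurable (lebesgue_on I)"
    by (rule measurable_restrict_space1)
  moreover have "(\<lambda>t. indicator (P n) t * (w (L n t) * indicator I (L n t))) = (\<lambda>t. indicator (P n) t * w (L n t))"
  proof (rule ext)
    fix t show "indicator (P n) t * (w (L n t) * indicator I (L n t)) = indicator (P n) t * w (L n t)"
      using Linv_in[OF n, of t] by (cases "t \<in> P n") auto
  qed
  ultimately show ?thesis by simp
qed

end

lemma emeasure_lebesgue_on_Icc: "(a::real) < b \<Longrightarrow> emeasure (lebesgue_on {a..b}) {a..b} = ennreal (b - a)"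
  by (subst emeasure_restrict_space) auto

context setting begin

lemma posI: "emeasure (lebesgue_on I) (space (lebesgue_on I)) \<noteq> 0"
  using emeasure_lebesgue_on_Icc[OF x0N] x0N by simp

sublocale lp: lpsp I p
  by unfold_locales (use posI ppos' in auto)

lemma L_inv: assumes n: "n \<in> {1..N}" shows "L n (x (n - 1) - r n * x 0 + r n * s) = s"
proof -
  have d: "x n - x (n - 1) \<noteq> 0" "x N - x 0 \<noteq> 0" using xlt[OF n] x0N by auto
  have "x (n - 1) - r n * x 0 + r n * s - x (n - 1) = r n * (s - x 0)" by (simp add: algebra_simps)
  then have "L n (x (n - 1) - r n * x 0 + r n * s) = x 0 + (x N - x 0) / (x n - x (n - 1)) * (r n * (s - x 0))"
    unfolding Linv_def by simp
  also have "(x N - x 0) / (x n - x (n - 1)) * r n = 1" unfolding r_def using d by simp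
  then have "(x N - x 0) / (x n - x (n - 1)) * (r n * (s - x 0)) = s - x 0"
    by (metis mult.assoc mult_1)
  finally show ?thesis by simp
qed

lemma CV:
  fixes \<phi> :: "real \<Rightarrow> ennreal"
  assumes n: "n \<in> {1..N}" and \<phi>: "\<phi> \<in> borel_measurable (lebesgue_on I)"
  shows "(\<integral>\<^sup>+ t. indicator (P n) t * \<phi> (L n t) \<partial>lebesgue_on I) \<le> ennreal (r n) * (\<integral>\<^sup>+ s. \<phi> s \<partial>lebesgue_on I)"
proof -
  define \<phi>' where "\<phi>' s = \<phi> s * indicator I s" for s
  have m': "\<phi>' \<in> borel_measurable lebesgue"
    using \<phi> unfolding \<phi>'_def by (subst borel_measurable_restrict_space_iff_ennreal[symmetric]) auto
  define \<psi> where "\<psi> t = indicator (P n) t * \<phi>' (L n t)" for t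
  have m\<psi>: "\<psi> \<in> borel_measurable lebesgue"
    unfolding \<psi>_def using borel_measurable_times_ennreal[OF borel_measurable_indicator[OF piece_sets] comp_meas[OF n m']]
    by simp
  have rn: "r n \<noteq> 0" "0 < r n" using r_pos[OF n] by auto
  have "(\<integral>\<^sup>+ t. indicator (P n) t * \<phi> (L n t) \<partial>lebesgue_on I) = (\<integral>\<^sup>+ t. indicator (P n) t * \<phi> (L n t) * indicator I t \<partial>lebesgue)"
    by (subst nn_integral_restrict_space) auto
  also have "\<dots> = (\<integral>\<^sup>+ t. \<psi> t \<partial>lebesgue)"
  proof (rule nn_integral_cong)
    fix t
    show "indicator (P n) t * \<phi> (L n t) * indicator I t = \<psi> t"
    proof (cases "t \<in> P n")
      case True
      then have "t \<in> I" "L n t \<in> I" using piece_subI[OF n] Linv_in[OF n] by auto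
      then show ?thesis using True unfolding \<psi>_def \<phi>'_def by simp
    next
      case False then show ?thesis unfolding \<psi>_def by simp
    qed
  qed
  also have "\<dots> = ennreal \<bar>r n\<bar> * (\<integral>\<^sup>+ s. \<psi> (x (n - 1) - r n * x 0 + r n * s) \<partial>lebesgue)"
    by (rule nn_integral_real_affine_lebesgue[OF m\<psi> rn(1)])
  also have "\<dots> \<le> ennreal (r n) * (\<integral>\<^sup>+ s. \<phi>' s \<partial>lebesgue)"
  proof -
    have "(\<integral>\<^sup>+ s. \<psi> (x (n - 1) - r n * x 0 + r n * s) \<partial>lebesgue) \<le> (\<integral>\<^sup>+ s. \<phi>' s \<partial>lebesgue)"
    proof (rule nn_integral_mono)
      fix s
      show "\<psi> (x (n - 1) - r n * x 0 + r n * s) \<le> \<phi>' s"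
        unfolding \<psi>_def L_inv[OF n] by (simp add: indicator_def mult_le_one)
    qed
    then show ?thesis using rn by (simp add: mult_left_mono)
  qed
  also have "(\<integral>\<^sup>+ s. \<phi>' s \<partial>lebesgue) = (\<integral>\<^sup>+ s. \<phi> s \<partial>lebesgue_on I)"
    unfolding \<phi>'_def by (subst nn_integral_restrict_space) auto
  finally show ?thesis .
qed

lemma NT:
  assumes n: "n \<in> {1..N}" and ae: "AE s in lebesgue_on I. Q s"
  shows "AE t in lebesgue_on I. t \<in> P n \<longrightarrow> Q (L n t)"
proof -
  from ae obtain Z where Z: "{s \<in> space (lebesgue_on I). \<not> Q s} \<subseteq> Z"
    "emeasure (lebesgue_on I) Z = 0" "Z \<in> sets (lebesgue_on I)" by (rule AE_E)
  have mZ: "(indicator Z :: real \<Rightarrow> ennreal) \<in> borel_measurable (lebesgue_on I)" using Z(3) by simp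
  have "(\<integral>\<^sup>+ t. indicator (P n) t * indicator Z (L n t) \<partial>lebesgue_on I) \<le> ennreal (r n) * (\<integral>\<^sup>+ s. indicator Z s \<partial>lebesgue_on I)"
    by (rule CV[OF n mZ])
  also have "(\<integral>\<^sup>+ s. indicator Z s \<partial>lebesgue_on I) = 0" using Z by simp
  finally have "(\<integral>\<^sup>+ t. indicator (P n) t * indicator Z (L n t) \<partial>lebesgue_on I) = (0::ennreal)" by simp
  then have "AE t in lebesgue_on I. indicator (P n) t * indicator Z (L n t) = (0::ennreal)"
    using nn_integral_0_iff_AE[OF MCe[OF n mZ]] by simp
  then show ?thesis
  proof eventually_elim
    case (elim t)
    show ?case
    proof
      assume t: "t \<in> P n"
      then have LI: "L n t \<in> I" by (rule Linv_in[OF n])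
      have "L n t \<notin> Z" using elim t by (auto simp: indicator_def)
      then show "Q (L n t)" using Z(1) LI by auto
    qed
  qed
qed

definition \<Lambda>0 :: real where "\<Lambda>0 = real_of_ereal (Lam x N \<alpha>)"

lemma Max_ge0: "0 \<le> Max ((\<lambda>n. \<bar>\<alpha> n t\<bar>) ` {1..N})"
proof -
  have "\<bar>\<alpha> 1 t\<bar> \<le> Max ((\<lambda>n. \<bar>\<alpha> n t\<bar>) ` {1..N})" using N2 by (intro Max_ge) auto
  then show ?thesis by (meson abs_ge_zero order_trans)
qed

lemma Lam_nonneg: "0 \<le> Lam x N \<alpha>"
proof -
  have "esssup (lebesgue_on I) (\<lambda>t. (0::ereal)) \<le> Lam x N \<alpha>"
    unfolding Lam_def
  proof (rule esssup_mono)
    fix t show "(0::ereal) \<le> ereal (Max ((\<lambda>n. \<bar>\<alpha> n t\<bar>) ` {1..N}))"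
      using Max_ge0[of t] by (simp only: ereal_less_eq(5) zero_ereal_def[symmetric])
  qed auto
  then show ?thesis using esssup_const[OF posI, of "0::ereal"] by simp
qed

lemma Lam_eq: "Lam x N \<alpha> = ereal \<Lambda>0" and \<Lambda>0_ge: "0 \<le> \<Lambda>0" and \<Lambda>0_lt: "\<Lambda>0 < 1"
  using Lam_nonneg Lam1 unfolding \<Lambda>0_def by (cases "Lam x N \<alpha>"; auto)+

lemma LamAE: "AE s in lebesgue_on I. \<forall>n\<in>{1..N}. \<bar>\<alpha> n s\<bar> \<le> \<Lambda>0"
proof -
  have "AE s in lebesgue_on I. ereal (Max ((\<lambda>n. \<bar>\<alpha> n s\<bar>) ` {1..N})) \<le> Lam x N \<alpha>"
    unfolding Lam_def by (rule esssup_AE)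
  then show ?thesis
  proof eventually_elim
    case (elim s)
    then have "Max ((\<lambda>n. \<bar>\<alpha> n s\<bar>) ` {1..N}) \<le> \<Lambda>0" unfolding Lam_eq by simp
    moreover have "\<bar>\<alpha> n s\<bar> \<le> Max ((\<lambda>n. \<bar>\<alpha> n s\<bar>) ` {1..N})" if "n \<in> {1..N}" for n
      using that by (intro Max_ge) auto
    ultimately show ?case by (meson order_trans)
  qed
qed

end

context setting begin

abbreviation "M \<equiv> lebesgue_on I"
abbreviation "q \<equiv> enn2real p"

definition Lm :: real where "Lm = (if 1 \<le> p then \<Lambda>0 else \<Lambda>0 powr q)"

lemma Lm_ge: "0 \<le> Lm" and Lm_lt: "Lm < 1"
proof -
  show "0 \<le> Lm" unfolding Lm_def using \<Lambda>0_ge by auto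
  show "Lm < 1"
  proof (cases "1 \<le> p")
    case True then show ?thesis unfolding Lm_def using \<Lambda>0_lt by simp
  next
    case False
    then have "p \<noteq> top" by auto
    then have q: "0 < q" by (rule lp.q_pos)
    show ?thesis
    proof (cases "\<Lambda>0 = 0")
      case True then show ?thesis unfolding Lm_def using False by simp
    next
      case F2: False
      then have "\<Lambda>0 powr q < 1 powr q" using \<Lambda>0_ge \<Lambda>0_lt q by (intro powr_less_mono2) auto
      then show ?thesis unfolding Lm_def using False by simp
    qed
  qed
qed

lemma \<alpha>meas: "n \<in> {1..N} \<Longrightarrow> \<alpha> n \<in> borel_measurable M"
  using \<alpha>m by blast

lemma Sop_fun: "Sop u = (\<lambda>t. \<Sum>n\<in>{1..N}. indicator (P n) t * (\<alpha> n (L n t) * u (L n t)))"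
  by (simp add: fun_eq_iff Sop_def)

lemma Sop_meas: "u \<in> borel_measurable M \<Longrightarrow> Sop u \<in> borel_measurable M"
  unfolding Sop_fun
proof (rule borel_measurable_sum)
  fix n assume n: "n \<in> {1..N}" and u: "u \<in> borel_measurable M"
  have "(\<lambda>s. \<alpha> n s * u s) \<in> borel_measurable M" using borel_measurable_times[OF \<alpha>meas[OF n] u] .
  from MC[OF n this] show "(\<lambda>t. indicator (P n) t * (\<alpha> n (L n t) * u (L n t))) \<in> borel_measurable M" .
qed

lemma Sop_at:
  assumes "m \<in> {1..N}" "t \<in> P m" shows "Sop u t = \<alpha> m (L m t) * u (L m t)"
  unfolding Sop_def by (rule sum_single[OF assms])

lemma Sop_none:
  assumes "\<forall>m\<in>{1..N}. t \<notin> P m" shows "Sop u t = 0"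
  unfolding Sop_def by (rule sum_none[OF assms])

lemma Sop_top:
  assumes top: "p = top" and u: "in_Lp I p u"
  shows "AE t in M. \<bar>Sop u t\<bar> \<le> \<Lambda>0 * pnorm I p u"
proof -
  have ae1: "AE s in M. (\<forall>n\<in>{1..N}. \<bar>\<alpha> n s\<bar> \<le> \<Lambda>0) \<and> \<bar>u s\<bar> \<le> pnorm I p u"
    using LamAE lp.E_AE[OF u top] by eventually_elim auto
  have "\<forall>n\<in>{1..N}. AE t in M. t \<in> P n \<longrightarrow> ((\<forall>k\<in>{1..N}. \<bar>\<alpha> k (L n t)\<bar> \<le> \<Lambda>0) \<and> \<bar>u (L n t)\<bar> \<le> pnorm I p u)"
    using NT[OF _ ae1] by blast
  then have "AE t in M. \<forall>n\<in>{1..N}. t \<in> P n \<longrightarrow> ((\<forall>k\<in>{1..N}. \<bar>\<alpha> k (L n t)\<bar> \<le> \<Lambda>0) \<and> \<bar>u (L n t)\<bar> \<le> pnorm I p u)"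
    by (rule eventually_ball_finite[rotated]) auto
  then show ?thesis
  proof eventually_elim
    case (elim t)
    show ?case
    proof (cases "\<exists>m\<in>{1..N}. t \<in> P m")
      case True
      then obtain m where m: "m \<in> {1..N}" "t \<in> P m" by blast
      then have b: "\<bar>\<alpha> m (L m t)\<bar> \<le> \<Lambda>0" "\<bar>u (L m t)\<bar> \<le> pnorm I p u" using elim by auto
      have "\<bar>Sop u t\<bar> = \<bar>\<alpha> m (L m t)\<bar> * \<bar>u (L m t)\<bar>" using Sop_at[OF m] by (simp add: abs_mult)
      also have "\<dots> \<le> \<Lambda>0 * pnorm I p u" using b \<Lambda>0_ge by (intro mult_mono) auto
      finally show ?thesis .
    next
      case False
      then show ?thesis using Sop_none[of t u] \<Lambda>0_ge lp.pnorm_nonneg[of u] by simp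
    qed
  qed
qed

lemma Sop_fin:
  assumes fin: "p \<noteq> top" and u: "u \<in> borel_measurable M"
  shows "Phi M q (Sop u) \<le> ennreal (\<Lambda>0 powr q) * Phi M q u"
proof -
  have q: "0 < q" using lp.q_pos[OF fin] .
  define \<phi> where "\<phi> n s = ennreal (\<bar>\<alpha> n s * u s\<bar> powr q)" for n s
  have m\<phi>: "\<phi> n \<in> borel_measurable M" if "n \<in> {1..N}" for n
  proof -
    have [measurable]: "\<alpha> n \<in> borel_measurable M" "u \<in> borel_measurable M" using \<alpha>meas[OF that] u by auto
    show ?thesis unfolding \<phi>_def by measurable
  qed
  have pt: "ennreal (\<bar>Sop u t\<bar> powr q) = (\<Sum>n\<in>{1..N}. indicator (P n) t * \<phi> n (L n t))" for t
  proof (cases "\<exists>m\<in>{1..N}. t \<in> P m")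
    case True
    then obtain m where m: "m \<in> {1..N}" "t \<in> P m" by blast
    show ?thesis unfolding Sop_at[OF m] sum_single[OF m] \<phi>_def ..
  next
    case False
    then show ?thesis using Sop_none[of t u] sum_none[OF ballI[OF False[unfolded bex_simps, rule_format]]] by simp
  qed
  have "Phi M q (Sop u) = (\<integral>\<^sup>+ t. (\<Sum>n\<in>{1..N}. indicator (P n) t * \<phi> n (L n t)) \<partial>M)"
    unfolding Phi_def pt ..
  also have "\<dots> = (\<Sum>n\<in>{1..N}. \<integral>\<^sup>+ t. indicator (P n) t * \<phi> n (L n t) \<partial>M)"
    by (rule nn_integral_sum) (rule MCe[OF _ m\<phi>])
  also have "\<dots> \<le> (\<Sum>n\<in>{1..N}. ennreal (r n) * (ennreal (\<Lambda>0 powr q) * Phi M q u))"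
  proof (rule sum_mono)
    fix n assume n: "n \<in> {1..N}"
    have "(\<integral>\<^sup>+ t. indicator (P n) t * \<phi> n (L n t) \<partial>M) \<le> ennreal (r n) * (\<integral>\<^sup>+ s. \<phi> n s \<partial>M)"
      by (rule CV[OF n m\<phi>[OF n]])
    also have "(\<integral>\<^sup>+ s. \<phi> n s \<partial>M) \<le> (\<integral>\<^sup>+ s. ennreal (\<Lambda>0 powr q) * ennreal (\<bar>u s\<bar> powr q) \<partial>M)"
    proof (rule nn_integral_mono_AE)
      show "AE s in M. \<phi> n s \<le> ennreal (\<Lambda>0 powr q) * ennreal (\<bar>u s\<bar> powr q)"
        using LamAE
      proof eventually_elim
        case (elim s)
        then have a: "\<bar>\<alpha> n s\<bar> \<le> \<Lambda>0" using n by auto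
        have "\<bar>\<alpha> n s * u s\<bar> powr q = \<bar>\<alpha> n s\<bar> powr q * \<bar>u s\<bar> powr q"
          by (simp add: abs_mult powr_mult)
        also have "\<dots> \<le> \<Lambda>0 powr q * \<bar>u s\<bar> powr q"
          using a q by (intro mult_right_mono powr_mono2) auto
        finally show ?case unfolding \<phi>_def
          by (simp add: ennreal_mult[symmetric] ennreal_leI)
      qed
    qed
    also have "\<dots> = ennreal (\<Lambda>0 powr q) * Phi M q u"
      unfolding Phi_def by (rule nn_integral_cmult) (use u in simp)
    finally show "(\<integral>\<^sup>+ t. indicator (P n) t * \<phi> n (L n t) \<partial>M) \<le> ennreal (r n) * (ennreal (\<Lambda>0 powr q) * Phi M q u)"
      by (simp add: mult_left_mono)
  qed
  also have "\<dots> = (\<Sum>n\<in>{1..N}. ennreal (r n)) * (ennreal (\<Lambda>0 powr q) * Phi M q u)"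
    by (simp add: sum_distrib_right)
  also have "(\<Sum>n\<in>{1..N}. ennreal (r n)) = 1"
    using r_pos sum_r by (subst sum_ennreal) (auto simp: less_imp_le)
  finally show ?thesis by simp
qed


lemma Sop_Lp:
  assumes u: "in_Lp I p u"
  shows "in_Lp I p (Sop u) \<and> pnorm I p (Sop u) \<le> Lm * pnorm I p u"
proof -
  have um: "u \<in> borel_measurable M" using lp.in_Lp_meas[OF u] .
  have sm: "Sop u \<in> borel_measurable M" by (rule Sop_meas[OF um])
  show ?thesis
  proof (cases "p = top")
    case True
    have "Lm = \<Lambda>0" unfolding Lm_def using True by simp
    then show ?thesis using lp.top_dom[OF True sm Sop_top[OF True u]] by simp
  next
    case False
    have q: "0 < q" by (rule lp.q_pos[OF False])
    define \<kappa> where "\<kappa> = (if 1 \<le> p then pnorm I p u powr q else pnorm I p u)"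
    have k0: "0 \<le> \<kappa>" unfolding \<kappa>_def using lp.pnorm_nonneg[of u] by auto
    have "Phi M q (Sop u) \<le> ennreal (\<Lambda>0 powr q) * Phi M q u" by (rule Sop_fin[OF False um])
    also have "Phi M q u = ennreal \<kappa>" unfolding \<kappa>_def by (rule lp.fin_Phi_eq[OF u False])
    finally have le: "Phi M q (Sop u) \<le> ennreal (\<Lambda>0 powr q * \<kappa>)"
      using k0 by (simp add: ennreal_mult)
    have inl: "in_Lp I p (Sop u)" by (rule lp.fin_dom[OF False sm le])
    have e: "enn2real (Phi M q (Sop u)) \<le> \<Lambda>0 powr q * \<kappa>"
      by (rule enn2real_leI[OF _ le]) (use k0 in auto)
    show ?thesis
    proof (cases "1 \<le> p")
      case True
      have "pnorm I p (Sop u) = enn2real (Phi M q (Sop u)) powr (1/q)"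
        unfolding pnorm_def Lp_int_Phi using False True by simp
      also have "\<dots> \<le> (\<Lambda>0 powr q * \<kappa>) powr (1/q)"
        by (rule powr_mono2) (use e q in auto)
      also have "\<dots> = \<Lambda>0 * pnorm I p u"
        unfolding \<kappa>_def using True q \<Lambda>0_ge lp.pnorm_nonneg[of u]
        by (simp add: powr_mult powr_powr)
      finally show ?thesis using inl True unfolding Lm_def by simp
    next
      case F2: False
      have "pnorm I p (Sop u) = enn2real (Phi M q (Sop u))"
        unfolding pnorm_def Lp_int_Phi using False F2 by simp
      also have "\<dots> \<le> \<Lambda>0 powr q * pnorm I p u" using e F2 unfolding \<kappa>_def by simp
      finally show ?thesis using inl F2 unfolding Lm_def by simp
    qed
  qed
qed

end

context setting begin

lemma abs_Lp: "in_Lp I p u \<Longrightarrow> in_Lp I p (\<lambda>s. \<bar>u s\<bar>) \<and> pnorm I p (\<lambda>s. \<bar>u s\<bar>) = pnorm I p u"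
  unfolding in_Lp_def pnorm_def Lp_int_def by auto

lemma iter_Lp:
  assumes h: "in_Lp I p h"
  shows "in_Lp I p ((Sop ^^ k) h) \<and> pnorm I p ((Sop ^^ k) h) \<le> Lm ^ k * pnorm I p h"
proof (induction k)
  case 0 then show ?case using h by simp
next
  case (Suc k)
  then have a: "in_Lp I p (Sop ((Sop ^^ k) h))" "pnorm I p (Sop ((Sop ^^ k) h)) \<le> Lm * pnorm I p ((Sop ^^ k) h)"
    using Sop_Lp by auto
  have "Lm * pnorm I p ((Sop ^^ k) h) \<le> Lm * (Lm ^ k * pnorm I p h)"
    using Suc Lm_ge by (intro mult_left_mono) auto
  then show ?case using a by simp
qed

lemma W_Lp:
  assumes h: "in_Lp I p h"
  shows "in_Lp I p (\<lambda>s. \<Sum>k<m. \<bar>(Sop ^^ k) h s\<bar>) \<and> pnorm I p (\<lambda>s. \<Sum>k<m. \<bar>(Sop ^^ k) h s\<bar>) \<le> pnorm I p h / (1 - Lm)"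
proof -
  have "in_Lp I p (\<lambda>s. \<Sum>k<m. \<bar>(Sop ^^ k) h s\<bar>) \<and> pnorm I p (\<lambda>s. \<Sum>k<m. \<bar>(Sop ^^ k) h s\<bar>) \<le> (\<Sum>k<m. Lm ^ k) * pnorm I p h"
  proof (induction m)
    case 0 then show ?case using lp.in_Lp_zero lp.pnorm_zero by simp
  next
    case (Suc m)
    have a: "in_Lp I p (\<lambda>s. \<bar>(Sop ^^ m) h s\<bar>)" "pnorm I p (\<lambda>s. \<bar>(Sop ^^ m) h s\<bar>) \<le> Lm ^ m * pnorm I p h"
      using abs_Lp iter_Lp[OF h, of m] by auto
    from lp.triangle[OF conjunct1[OF Suc] a(1)] have
      "in_Lp I p (\<lambda>s. (\<Sum>k<m. \<bar>(Sop ^^ k) h s\<bar>) + \<bar>(Sop ^^ m) h s\<bar>) \<and>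
       pnorm I p (\<lambda>s. (\<Sum>k<m. \<bar>(Sop ^^ k) h s\<bar>) + \<bar>(Sop ^^ m) h s\<bar>) \<le>
       pnorm I p (\<lambda>s. \<Sum>k<m. \<bar>(Sop ^^ k) h s\<bar>) + pnorm I p (\<lambda>s. \<bar>(Sop ^^ m) h s\<bar>)" .
    then show ?case using Suc a by (simp add: distrib_right)
  qed
  moreover have "(\<Sum>k<m. Lm ^ k) * pnorm I p h \<le> pnorm I p h / (1 - Lm)"
  proof -
    have "(\<Sum>k<m. Lm ^ k) = (1 - Lm ^ m) / (1 - Lm)" using Lm_lt by (simp add: sum_gp_strict)
    also have "\<dots> \<le> 1 / (1 - Lm)" using Lm_lt Lm_ge by (intro divide_right_mono) auto
    finally show ?thesis using lp.pnorm_nonneg[of h] by (metis mult_right_mono times_divide_eq_left mult_1)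
  qed
  ultimately show ?thesis by linarith
qed


lemma W_AE:
  assumes h: "in_Lp I p h"
  shows "AE s in M. \<exists>B::nat. \<forall>m. (\<Sum>k<m. \<bar>(Sop ^^ k) h s\<bar>) \<le> real B"
proof -
  define W where "W m s = (\<Sum>k<m. \<bar>(Sop ^^ k) h s\<bar>)" for m s
  define C where "C = pnorm I p h / (1 - Lm)"
  have WL: "in_Lp I p (W m)" "pnorm I p (W m) \<le> C" for m
    using W_Lp[OF h, of m] unfolding W_def[abs_def] C_def by auto
  have Wm[measurable]: "W m \<in> borel_measurable M" for m using lp.in_Lp_meas[OF WL(1)] .
  have W0: "0 \<le> W m s" for m s unfolding W_def by auto
  have Wmono: "W m s \<le> W (Suc m) s" for m s unfolding W_def by simp
  have "AE s in M. \<exists>R. \<forall>m. W m s \<le> R"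
  proof (cases "p = top")
    case True
    have "\<forall>m. AE s in M. W m s \<le> C"
    proof
      fix m
      show "AE s in M. W m s \<le> C" using lp.E_AE[OF WL(1) True, of m]
        by eventually_elim (use WL(2)[of m] in auto)
    qed
    then have "AE s in M. \<forall>m. W m s \<le> C" by (simp add: AE_all_countable)
    then show ?thesis by eventually_elim blast
  next
    case False
    have q: "0 < q" by (rule lp.q_pos[OF False])
    define \<kappa> where "\<kappa> r = (if 1 \<le> p then r powr q else r)" for r
    have \<kappa>mono: "\<kappa> a \<le> \<kappa> b" if "0 \<le> a" "a \<le> b" for a b
      unfolding \<kappa>_def using that q by (auto intro: powr_mono2)
    define F where "F m s = ennreal (W m s powr q)" for m s
    have Fm[measurable]: "F m \<in> borel_measurable M" for m unfolding F_def by measurable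
    have inc: "incseq F"
      by (rule incseq_SucI) (auto simp: le_fun_def F_def intro!: ennreal_leI powr_mono2 Wmono W0 q[THEN less_imp_le])
    have "(\<integral>\<^sup>+ s. (SUP m. F m s) \<partial>M) = (SUP m. integral\<^sup>N M (F m))"
      by (rule nn_integral_monotone_convergence_SUP[OF inc Fm])
    also have "\<dots> \<le> ennreal (\<kappa> C)"
    proof (rule SUP_least)
      fix m
      have "integral\<^sup>N M (F m) = Phi M q (W m)" unfolding F_def Phi_def using W0 by simp
      also have "\<dots> = ennreal (\<kappa> (pnorm I p (W m)))" unfolding \<kappa>_def by (rule lp.fin_Phi_eq[OF WL(1) False])
      also have "\<dots> \<le> ennreal (\<kappa> C)" using \<kappa>mono[OF lp.pnorm_nonneg WL(2)] by (rule ennreal_leI)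
      finally show "integral\<^sup>N M (F m) \<le> ennreal (\<kappa> C)" .
    qed
    finally have "(\<integral>\<^sup>+ s. (SUP m. F m s) \<partial>M) \<noteq> \<infinity>" by (metis ennreal_neq_top infinity_ennreal_def neq_top_trans)
    then have "AE s in M. (SUP m. F m s) \<noteq> \<infinity>" by (intro nn_integral_PInf_AE) auto
    then show ?thesis
    proof eventually_elim
      case (elim s)
      define R where "R = enn2real (SUP m. F m s)"
      have R0: "0 \<le> R" unfolding R_def by simp
      have lt: "(SUP m. F m s) < top" using elim by (simp add: less_top[symmetric])
      have SR: "(SUP m. F m s) = ennreal R" unfolding R_def using ennreal_enn2real[OF lt] by simp
      have "W m s \<le> R powr (1/q)" for m
      proof -
        have "F m s \<le> ennreal R" unfolding SR[symmetric] by (rule SUP_upper) simp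
        then have "W m s powr q \<le> R" unfolding F_def using R0 by (simp add: ennreal_le_iff)
        then have "(W m s powr q) powr (1/q) \<le> R powr (1/q)" by (intro powr_mono2) (use q in auto)
        then show ?thesis using q W0[of m s] by (simp add: powr_powr)
      qed
      then show ?case by blast
    qed
  qed
  then show ?thesis
  proof eventually_elim
    case (elim s)
    then obtain R where "\<forall>m. W m s \<le> R" by blast
    moreover obtain B :: nat where "R \<le> real B" using real_arch_simple by blast
    ultimately show ?case unfolding W_def by (meson order_trans)
  qed
qed

end

context setting begin

lemma exist_fp:
  assumes h: "in_Lp I p h"
  shows "\<exists>g. in_Lp I p g \<and> (AE t in M. g t = h t + Sop g t)"
proof -
  define u where "u k = (Sop ^^ k) h" for k
  define W where "W m s = (\<Sum>k<m. \<bar>u k s\<bar>)" for m s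
  define A where "A s = (\<exists>B::nat. \<forall>m. W m s \<le> real B)" for s
  define G where "G s = (if A s then (\<Sum>k. u k s) else 0)" for s
  define Gm where "Gm m s = (if A s then (\<Sum>k<m. u k s) else 0)" for m s
  define C where "C = pnorm I p h / (1 - Lm)"
  have uL: "in_Lp I p (u k)" for k unfolding u_def using iter_Lp[OF h] by blast
  have um[measurable]: "u k \<in> borel_measurable M" for k using lp.in_Lp_meas[OF uL] .
  have WL: "in_Lp I p (W m)" "pnorm I p (W m) \<le> C" for m
    using W_Lp[OF h, of m] unfolding W_def[abs_def] u_def C_def by auto
  have Wm[measurable]: "W m \<in> borel_measurable M" for m unfolding W_def by measurable
  have Ameas[measurable]: "Measurable.pred M A" unfolding A_def by measurable
  have summ: "summable (\<lambda>k. u k s)" if a: "A s" for s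
  proof -
    obtain B :: nat where "\<forall>m. W m s \<le> real B" using a unfolding A_def by blast
    then have "summable (\<lambda>k. \<bar>u k s\<bar>)"
      by (intro summableI_nonneg_bounded[where x="real B"]) (auto simp: W_def)
    then show ?thesis by (rule summable_rabs_cancel)
  qed
  have Gmm[measurable]: "Gm m \<in> borel_measurable M" for m unfolding Gm_def by measurable
  have lim: "(\<lambda>m. Gm m s) \<longlonglongrightarrow> G s" for s
  proof (cases "A s")
    case True then show ?thesis unfolding Gm_def G_def using summable_LIMSEQ[OF summ[OF True]] by simp
  next
    case False then show ?thesis unfolding Gm_def G_def by simp
  qed
  have Gmeas[measurable]: "G \<in> borel_measurable M"
    by (rule borel_measurable_LIMSEQ_real[OF lim Gmm])
  have Gm_le: "\<bar>Gm m s\<bar> \<le> W m s" for m s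
    unfolding Gm_def W_def by (auto intro: sum_abs order_trans)
  have AEA: "AE s in M. A s"
    using W_AE[OF h] unfolding A_def W_def u_def .
  have GL: "in_Lp I p G"
  proof (cases "p = top")
    case True
    have "\<forall>m. AE s in M. W m s \<le> C"
    proof
      fix m
      show "AE s in M. W m s \<le> C" using lp.E_AE[OF WL(1) True, of m]
        by eventually_elim (use WL(2)[of m] in auto)
    qed
    then have "AE s in M. \<forall>m. W m s \<le> C" by (simp add: AE_all_countable)
    then have "AE s in M. \<bar>G s\<bar> \<le> C"
    proof eventually_elim
      case (elim s)
      show ?case
      proof (rule LIMSEQ_le_const2[OF tendsto_rabs[OF lim]])
        show "\<exists>N. \<forall>n\<ge>N. \<bar>Gm n s\<bar> \<le> C" using Gm_le elim by (meson order_trans)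
      qed
    qed
    then show ?thesis using lp.top_dom[OF True Gmeas] by blast
  next
    case False
    have q: "0 < q" by (rule lp.q_pos[OF False])
    define \<kappa> where "\<kappa> r = (if 1 \<le> p then r powr q else r)" for r
    have \<kappa>mono: "\<kappa> a \<le> \<kappa> b" if "0 \<le> a" "a \<le> b" for a b
      unfolding \<kappa>_def using that q by (auto intro: powr_mono2)
    have conv: "(\<lambda>m. ennreal (\<bar>Gm m s\<bar> powr q)) \<longlonglongrightarrow> ennreal (\<bar>G s\<bar> powr q)" for s
      by (intro tendsto_ennrealI tendsto_powr' tendsto_rabs lim tendsto_const) (use q in auto)
    have "Phi M q G = (\<integral>\<^sup>+ s. liminf (\<lambda>m. ennreal (\<bar>Gm m s\<bar> powr q)) \<partial>M)"
      unfolding Phi_def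
      by (rule nn_integral_cong) (simp add: lim_imp_Liminf[OF trivial_limit_sequentially conv])
    also have "\<dots> \<le> liminf (\<lambda>m. \<integral>\<^sup>+ s. ennreal (\<bar>Gm m s\<bar> powr q) \<partial>M)"
      by (rule nn_integral_liminf) measurable
    also have "\<dots> \<le> limsup (\<lambda>m. \<integral>\<^sup>+ s. ennreal (\<bar>Gm m s\<bar> powr q) \<partial>M)"
      by (rule Liminf_le_Limsup[OF trivial_limit_sequentially])
    also have "\<dots> \<le> ennreal (\<kappa> C)"
    proof (rule Limsup_bounded[OF always_eventually], rule allI)
      fix m
      have "(\<integral>\<^sup>+ s. ennreal (\<bar>Gm m s\<bar> powr q) \<partial>M) \<le> Phi M q (W m)"
        unfolding Phi_def
      proof (rule nn_integral_mono)
        fix s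
        have "\<bar>Gm m s\<bar> powr q \<le> \<bar>W m s\<bar> powr q"
          using Gm_le[of m s] q by (intro powr_mono2) auto
        then show "ennreal (\<bar>Gm m s\<bar> powr q) \<le> ennreal (\<bar>W m s\<bar> powr q)" by (rule ennreal_leI)
      qed
      also have "\<dots> = ennreal (\<kappa> (pnorm I p (W m)))" unfolding \<kappa>_def by (rule lp.fin_Phi_eq[OF WL(1) False])
      also have "\<dots> \<le> ennreal (\<kappa> C)" using \<kappa>mono[OF lp.pnorm_nonneg WL(2)] by (rule ennreal_leI)
      finally show "(\<integral>\<^sup>+ s. ennreal (\<bar>Gm m s\<bar> powr q) \<partial>M) \<le> ennreal (\<kappa> C)" .
    qed
    finally show ?thesis by (rule lp.fin_dom[OF False Gmeas])
  qed
  have "\<forall>n\<in>{1..N}. AE t in M. t \<in> P n \<longrightarrow> A (L n t)"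
    using NT[OF _ AEA] by blast
  then have "AE t in M. \<forall>n\<in>{1..N}. t \<in> P n \<longrightarrow> A (L n t)"
    by (rule eventually_ball_finite[rotated]) auto
  then have "AE t in M. G t = h t + Sop G t"
    using AEA
  proof eventually_elim
    case (elim t)
    have SG: "Sop G t = (\<Sum>k. Sop (u k) t)"
    proof (cases "\<exists>m\<in>{1..N}. t \<in> P m")
      case True
      then obtain m where m: "m \<in> {1..N}" "t \<in> P m" by blast
      then have AL: "A (L m t)" using elim by auto
      have "Sop G t = \<alpha> m (L m t) * (\<Sum>k. u k (L m t))" unfolding Sop_at[OF m] G_def using AL by simp
      also have "\<dots> = (\<Sum>k. \<alpha> m (L m t) * u k (L m t))" by (rule suminf_mult[OF summ[OF AL], symmetric])
      also have "\<dots> = (\<Sum>k. Sop (u k) t)" unfolding Sop_at[OF m] ..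
      finally show ?thesis .
    next
      case False
      then have "\<forall>m\<in>{1..N}. t \<notin> P m" by blast
      then show ?thesis using Sop_none by simp
    qed
    have "G t = (\<Sum>k. u k t)" unfolding G_def using elim by simp
    also have "\<dots> = u 0 t + (\<Sum>k. u (Suc k) t)" using suminf_split_head[OF summ] elim by simp
    also have "(\<Sum>k. u (Suc k) t) = (\<Sum>k. Sop (u k) t)" unfolding u_def by simp
    finally show ?case using SG unfolding u_def by simp
  qed
  then show ?thesis using GL by blast
qed

end

lemma hdist_le:
  fixes d :: "'a \<Rightarrow> 'a \<Rightarrow> real"
  assumes "H \<noteq> {}" "K \<noteq> {}" "\<And>h k. 0 \<le> d h k"
    and "\<And>h. h \<in> H \<Longrightarrow> \<exists>k\<in>K. d h k \<le> c"
    and "\<And>k. k \<in> K \<Longrightarrow> \<exists>h\<in>H. d h k \<le> c"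
  shows "hdist d H K \<le> c"
  unfolding hdist_def
proof (rule max.boundedI)
  show "(SUP h\<in>H. INF k\<in>K. d h k) \<le> c"
  proof (rule cSUP_least[OF assms(1)])
    fix h assume h: "h \<in> H"
    then obtain k where k: "k \<in> K" "d h k \<le> c" using assms(4) by blast
    show "(INF k\<in>K. d h k) \<le> c"
      using k by (intro cINF_lower2[where x=k]) (auto intro: bdd_belowI2[where m=0] assms(3))
  qed
  show "(SUP k\<in>K. INF h\<in>H. d h k) \<le> c"
  proof (rule cSUP_least[OF assms(2)])
    fix k assume k: "k \<in> K"
    then obtain h where h: "h \<in> H" "d h k \<le> c" using assms(5) by blast
    show "(INF h\<in>H. d h k) \<le> c"
      using h by (intro cINF_lower2[where x=h]) (auto intro: bdd_belowI2[where m=0] assms(3))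
  qed
qed

context setting begin

lemma Top_Sop: "Top x N \<alpha> f b g t = f t + Sop (\<lambda>s. g s - b s) t"
  by (simp add: Top_def Sop_def)

lemma Sop_diff: "Sop (\<lambda>s. u s - v s) t = Sop u t - Sop v t"
  unfolding Sop_def sum_subtractf[symmetric] by (rule sum.cong) (auto simp: right_diff_distrib)

lemma Sop_zero: "Sop (\<lambda>s. 0) t = 0"
  by (simp add: Sop_def)

abbreviation "st \<equiv> fstar p x N \<alpha>"

lemma st_spec:
  assumes f: "in_Lp I p f" and b: "in_Lp I p b"
  shows "in_Lp I p (st f b) \<and> (AE t in M. Top x N \<alpha> f b (st f b) t = st f b t)"
proof -
  have h: "in_Lp I p (\<lambda>t. f t - Sop b t)"
    using lp.triangle_sub[OF f conjunct1[OF Sop_Lp[OF b]]] by blast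
  obtain g where g: "in_Lp I p g" "AE t in M. g t = (f t - Sop b t) + Sop g t"
    using exist_fp[OF h] by blast
  have "AE t in M. Top x N \<alpha> f b g t = g t"
    using g(2) by eventually_elim (simp add: Top_Sop Sop_diff)
  then have "\<exists>g. in_Lp I p g \<and> (AE t in M. Top x N \<alpha> f b g t = g t)" using g(1) by blast
  then show ?thesis unfolding fstar_def by (rule someI_ex)
qed

lemma Lip:
  assumes g1: "in_Lp I p g1" and g2: "in_Lp I p g2"
    and f1: "in_Lp I p f1" and f2: "in_Lp I p f2" and b1: "in_Lp I p b1" and b2: "in_Lp I p b2"
    and e1: "AE t in M. Top x N \<alpha> f1 b1 g1 t = g1 t"
    and e2: "AE t in M. Top x N \<alpha> f2 b2 g2 t = g2 t"
  shows "pnorm I p (\<lambda>t. g1 t - g2 t) \<le> (pnorm I p (\<lambda>t. f1 t - f2 t) + Lm * pnorm I p (\<lambda>t. b1 t - b2 t)) / (1 - Lm)"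
proof -
  define e where "e s = (g1 s - g2 s) - (b1 s - b2 s)" for s
  have dL: "in_Lp I p (\<lambda>t. g1 t - g2 t)" using lp.triangle_sub[OF g1 g2] by blast
  have bL: "in_Lp I p (\<lambda>t. b1 t - b2 t)" using lp.triangle_sub[OF b1 b2] by blast
  have fL: "in_Lp I p (\<lambda>t. f1 t - f2 t)" using lp.triangle_sub[OF f1 f2] by blast
  have eL: "in_Lp I p e" and ne: "pnorm I p e \<le> pnorm I p (\<lambda>t. g1 t - g2 t) + pnorm I p (\<lambda>t. b1 t - b2 t)"
    using lp.triangle_sub[OF dL bL] unfolding e_def[abs_def] by auto
  have SeL: "in_Lp I p (Sop e)" and nSe: "pnorm I p (Sop e) \<le> Lm * pnorm I p e"
    using Sop_Lp[OF eL] by auto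
  have kL: "in_Lp I p (\<lambda>t. (f1 t - f2 t) + Sop e t)"
    and nk: "pnorm I p (\<lambda>t. (f1 t - f2 t) + Sop e t) \<le> pnorm I p (\<lambda>t. f1 t - f2 t) + pnorm I p (Sop e)"
    using lp.triangle[OF fL SeL] by auto
  have ae: "AE t in M. g1 t - g2 t = (f1 t - f2 t) + Sop e t"
    using e1 e2
  proof eventually_elim
    case (elim t)
    have "Sop e t = Sop (\<lambda>s. g1 s - b1 s) t - Sop (\<lambda>s. g2 s - b2 s) t"
      unfolding Sop_diff[symmetric] e_def by (simp add: algebra_simps)
    then show ?case using elim unfolding Top_Sop by linarith
  qed
  have "pnorm I p (\<lambda>t. g1 t - g2 t) = pnorm I p (\<lambda>t. (f1 t - f2 t) + Sop e t)"
    using lp.cong_AE[OF kL lp.in_Lp_meas[OF dL] ae] by simp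
  also have "\<dots> \<le> pnorm I p (\<lambda>t. f1 t - f2 t) + Lm * (pnorm I p (\<lambda>t. g1 t - g2 t) + pnorm I p (\<lambda>t. b1 t - b2 t))"
    using nk nSe ne Lm_ge by (meson add_left_mono mult_left_mono order_trans)
  finally have "(1 - Lm) * pnorm I p (\<lambda>t. g1 t - g2 t) \<le> pnorm I p (\<lambda>t. f1 t - f2 t) + Lm * pnorm I p (\<lambda>t. b1 t - b2 t)"
    by (simp add: algebra_simps)
  then show ?thesis using Lm_lt by (simp add: pos_le_divide_eq mult.commute)
qed

lemma triv_fp: "in_Lp I p g \<Longrightarrow> AE t in M. Top x N \<alpha> g g g t = g t"
  by (simp add: Top_Sop Sop_zero)

lemma st_st:
  assumes "in_Lp I p f1" "in_Lp I p b1" "in_Lp I p f2" "in_Lp I p b2"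
  shows "pnorm I p (\<lambda>t. st f1 b1 t - st f2 b2 t) \<le> (pnorm I p (\<lambda>t. f1 t - f2 t) + Lm * pnorm I p (\<lambda>t. b1 t - b2 t)) / (1 - Lm)"
  using st_spec[OF assms(1,2)] st_spec[OF assms(3,4)] by (intro Lip) (use assms in auto)

lemma g_st:
  assumes "in_Lp I p g" "in_Lp I p f" "in_Lp I p b"
  shows "pnorm I p (\<lambda>t. g t - st f b t) \<le> (pnorm I p (\<lambda>t. g t - f t) + Lm * pnorm I p (\<lambda>t. g t - b t)) / (1 - Lm)"
  using st_spec[OF assms(2,3)] triv_fp[OF assms(1)] by (intro Lip) (use assms in auto)

lemma diff_bound:
  assumes "in_Lp I p u" "in_Lp I p v" "pnorm I p u \<le> a" "pnorm I p v \<le> b"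
  shows "pnorm I p (\<lambda>t. u t - v t) \<le> a + b"
  using lp.triangle_sub[OF assms(1,2)] assms(3,4) by linarith

lemma pnorm_self: "pnorm I p (\<lambda>t. g t - g t) = 0"
  using lp.pnorm_zero by simp

end

theorem theorem5p2:
  fixes p :: ennreal and x :: "nat \<Rightarrow> real" and N :: nat
    and \<alpha> :: "nat \<Rightarrow> real \<Rightarrow> real"
    and F F' B B' :: "(real \<Rightarrow> real) set"
    and MF MF' MB MB' :: real and f b :: "real \<Rightarrow> real"
  assumes "0 < p" and "2 \<le> N" and "strict_mono_on {0..N} x"
    and "\<forall>n\<in>{1..N}. \<alpha> n \<in> borel_measurable (lebesgue_on {x 0..x N})"
    and "Lam x N \<alpha> < 1"
    and "F \<noteq> {}" "F' \<noteq> {}" "B \<noteq> {}" "B' \<noteq> {}"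
    and "Lp_compact {x 0..x N} p F" "Lp_compact {x 0..x N} p F'"
    and "Lp_compact {x 0..x N} p B" "Lp_compact {x 0..x N} p B'"
    and "\<forall>g\<in>F. pnorm {x 0..x N} p g \<le> MF" "\<forall>g\<in>F'. pnorm {x 0..x N} p g \<le> MF'"
    and "\<forall>g\<in>B. pnorm {x 0..x N} p g \<le> MB" "\<forall>g\<in>B'. pnorm {x 0..x N} p g \<le> MB'"
    and "in_Lp {x 0..x N} p f" "in_Lp {x 0..x N} p b"
  shows "let I = {x 0..x N};
             \<Lambda> = (if 1 \<le> p then real_of_ereal (Lam x N \<alpha>)
                  else real_of_ereal (Lam x N \<alpha>) powr enn2real p);
             d = hdist (pdist I p);
             st = fstar p x N \<alpha>;
             SS = (\<lambda>G C. {st g c | g c. g \<in> G \<and> c \<in> C})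
         in d F ((\<lambda>g. st g b) ` F) \<le> \<Lambda> / (1 - \<Lambda>) * (MF + pnorm I p b)
          \<and> d B ((\<lambda>c. st f c) ` B) \<le> 1 / (1 - \<Lambda>) * (MB + pnorm I p f)
          \<and> d F (SS F B) \<le> \<Lambda> / (1 - \<Lambda>) * (MF + MB)
          \<and> d B (SS F B) \<le> 1 / (1 - \<Lambda>) * (MB + MF)
          \<and> d (SS F B) (SS F' B) \<le> 1 / (1 - \<Lambda>) * (MF + MF')
          \<and> d (SS F B) (SS F B') \<le> \<Lambda> / (1 - \<Lambda>) * (MB + MB')
          \<and> d (SS F B) (SS F' B') \<le> 1 / (1 - \<Lambda>) * ((MF + MF') + \<Lambda> * (MB + MB'))"
proof -
  interpret S: setting x N \<alpha> p
    using assms(1-5) by unfold_locales auto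
  let ?I = "{x 0..x N}"
  have \<Lambda>: "(if 1 \<le> p then real_of_ereal (Lam x N \<alpha>) else real_of_ereal (Lam x N \<alpha>) powr enn2real p) = S.Lm"
    unfolding S.Lm_def S.\<Lambda>0_def ..
  have FL: "\<And>g. g \<in> F \<Longrightarrow> in_Lp ?I p g" using assms(10) unfolding Lp_compact_def by blast
  have F'L: "\<And>g. g \<in> F' \<Longrightarrow> in_Lp ?I p g" using assms(11) unfolding Lp_compact_def by blast
  have BL: "\<And>g. g \<in> B \<Longrightarrow> in_Lp ?I p g" using assms(12) unfolding Lp_compact_def by blast
  have B'L: "\<And>g. g \<in> B' \<Longrightarrow> in_Lp ?I p g" using assms(13) unfolding Lp_compact_def by blast
  have fL: "in_Lp ?I p f" and bL: "in_Lp ?I p b" using assms(18,19) .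
  have MF: "\<And>g. g \<in> F \<Longrightarrow> pnorm ?I p g \<le> MF" using assms(14) by blast
  have MF': "\<And>g. g \<in> F' \<Longrightarrow> pnorm ?I p g \<le> MF'" using assms(15) by blast
  have MB: "\<And>g. g \<in> B \<Longrightarrow> pnorm ?I p g \<le> MB" using assms(16) by blast
  have MB': "\<And>g. g \<in> B' \<Longrightarrow> pnorm ?I p g \<le> MB'" using assms(17) by blast
  have Lg: "0 \<le> S.Lm" and Ll: "S.Lm < 1" using S.Lm_ge S.Lm_lt .
  have dpos: "\<And>g h. 0 \<le> pdist ?I p g h" unfolding pdist_def using S.lp.pnorm_nonneg .
  define SS where "SS G C = {S.st g c | g c. g \<in> G \<and> c \<in> C}" for G C
  have SSne: "SS G C \<noteq> {}" if "G \<noteq> {}" "C \<noteq> {}" for G C using that unfolding SS_def by blast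
  have divm: "X / (1 - S.Lm) \<le> Y / (1 - S.Lm)" if "X \<le> Y" for X Y
    using that Ll by (intro divide_right_mono) auto
  have i1: "hdist (pdist ?I p) F ((\<lambda>g. S.st g b) ` F) \<le> S.Lm / (1 - S.Lm) * (MF + pnorm ?I p b)"
  proof -
    have key: "pdist ?I p g (S.st g b) \<le> S.Lm / (1 - S.Lm) * (MF + pnorm ?I p b)" if g: "g \<in> F" for g
    proof -
      have "pdist ?I p g (S.st g b) \<le> (pnorm ?I p (\<lambda>t. g t - g t) + S.Lm * pnorm ?I p (\<lambda>t. g t - b t)) / (1 - S.Lm)"
        unfolding pdist_def by (rule S.g_st[OF FL[OF g] FL[OF g] bL])
      also have "\<dots> \<le> (S.Lm * (MF + pnorm ?I p b)) / (1 - S.Lm)"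
        unfolding S.pnorm_self using Lg S.diff_bound[OF FL[OF g] bL MF[OF g] order_refl]
        by (intro divm) (simp add: mult_left_mono)
      finally show ?thesis by simp
    qed
    show ?thesis
      by (rule hdist_le) (use assms(6) dpos key in auto)
  qed
  have i2: "hdist (pdist ?I p) B ((\<lambda>c. S.st f c) ` B) \<le> 1 / (1 - S.Lm) * (MB + pnorm ?I p f)"
  proof -
    have key: "pdist ?I p c (S.st f c) \<le> 1 / (1 - S.Lm) * (MB + pnorm ?I p f)" if c: "c \<in> B" for c
    proof -
      have "pdist ?I p c (S.st f c) \<le> (pnorm ?I p (\<lambda>t. c t - f t) + S.Lm * pnorm ?I p (\<lambda>t. c t - c t)) / (1 - S.Lm)"
        unfolding pdist_def by (rule S.g_st[OF BL[OF c] fL BL[OF c]])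
      also have "\<dots> \<le> (MB + pnorm ?I p f) / (1 - S.Lm)"
        unfolding S.pnorm_self using S.diff_bound[OF BL[OF c] fL MB[OF c] order_refl]
        by (intro divm) simp
      finally show ?thesis by simp
    qed
    show ?thesis
      by (rule hdist_le) (use assms(8) dpos key in auto)
  qed
  have i3: "hdist (pdist ?I p) F (SS F B) \<le> S.Lm / (1 - S.Lm) * (MF + MB)"
  proof -
    have key: "pdist ?I p g (S.st g c) \<le> S.Lm / (1 - S.Lm) * (MF + MB)" if g: "g \<in> F" and c: "c \<in> B" for g c
    proof -
      have "pdist ?I p g (S.st g c) \<le> (pnorm ?I p (\<lambda>t. g t - g t) + S.Lm * pnorm ?I p (\<lambda>t. g t - c t)) / (1 - S.Lm)"
        unfolding pdist_def by (rule S.g_st[OF FL[OF g] FL[OF g] BL[OF c]])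
      also have "\<dots> \<le> (S.Lm * (MF + MB)) / (1 - S.Lm)"
        unfolding S.pnorm_self using Lg S.diff_bound[OF FL[OF g] BL[OF c] MF[OF g] MB[OF c]]
        by (intro divm) (simp add: mult_left_mono)
      finally show ?thesis by simp
    qed
    show ?thesis
    proof (rule hdist_le[OF assms(6) SSne[OF assms(6,8)] dpos])
      fix g assume g: "g \<in> F"
      obtain c where c: "c \<in> B" using assms(8) by blast
      show "\<exists>k\<in>SS F B. pdist ?I p g k \<le> S.Lm / (1 - S.Lm) * (MF + MB)"
        using key[OF g c] g c unfolding SS_def by blast
    next
      fix k assume "k \<in> SS F B"
      then obtain g c where k: "k = S.st g c" "g \<in> F" "c \<in> B" unfolding SS_def by blast
      show "\<exists>h\<in>F. pdist ?I p h k \<le> S.Lm / (1 - S.Lm) * (MF + MB)"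
        using key[OF k(2,3)] k by blast
    qed
  qed
  have i4: "hdist (pdist ?I p) B (SS F B) \<le> 1 / (1 - S.Lm) * (MB + MF)"
  proof -
    have key: "pdist ?I p c (S.st g c) \<le> 1 / (1 - S.Lm) * (MB + MF)" if g: "g \<in> F" and c: "c \<in> B" for g c
    proof -
      have "pdist ?I p c (S.st g c) \<le> (pnorm ?I p (\<lambda>t. c t - g t) + S.Lm * pnorm ?I p (\<lambda>t. c t - c t)) / (1 - S.Lm)"
        unfolding pdist_def by (rule S.g_st[OF BL[OF c] FL[OF g] BL[OF c]])
      also have "\<dots> \<le> (MB + MF) / (1 - S.Lm)"
        unfolding S.pnorm_self using S.diff_bound[OF BL[OF c] FL[OF g] MB[OF c] MF[OF g]]
        by (intro divm) simp
      finally show ?thesis by simp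
    qed
    show ?thesis
    proof (rule hdist_le[OF assms(8) SSne[OF assms(6,8)] dpos])
      fix c assume c: "c \<in> B"
      obtain g where g: "g \<in> F" using assms(6) by blast
      show "\<exists>k\<in>SS F B. pdist ?I p c k \<le> 1 / (1 - S.Lm) * (MB + MF)"
        using key[OF g c] g c unfolding SS_def by blast
    next
      fix k assume "k \<in> SS F B"
      then obtain g c where k: "k = S.st g c" "g \<in> F" "c \<in> B" unfolding SS_def by blast
      show "\<exists>h\<in>B. pdist ?I p h k \<le> 1 / (1 - S.Lm) * (MB + MF)"
        using key[OF k(2,3)] k by blast
    qed
  qed
  have gen: "hdist (pdist ?I p) (SS G1 C1) (SS G2 C2) \<le> (X + S.Lm * Y) / (1 - S.Lm)"
    if G1: "G1 \<noteq> {}" "\<And>g. g \<in> G1 \<Longrightarrow> in_Lp ?I p g" "\<And>g. g \<in> G1 \<Longrightarrow> pnorm ?I p g \<le> X1"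
      and G2: "G2 \<noteq> {}" "\<And>g. g \<in> G2 \<Longrightarrow> in_Lp ?I p g" "\<And>g. g \<in> G2 \<Longrightarrow> pnorm ?I p g \<le> X2"
      and C1: "C1 \<noteq> {}" "\<And>g. g \<in> C1 \<Longrightarrow> in_Lp ?I p g" "\<And>g. g \<in> C1 \<Longrightarrow> pnorm ?I p g \<le> Y1"
      and C2: "C2 \<noteq> {}" "\<And>g. g \<in> C2 \<Longrightarrow> in_Lp ?I p g" "\<And>g. g \<in> C2 \<Longrightarrow> pnorm ?I p g \<le> Y2"
      and XY: "(G1 = G2 \<and> X = 0) \<or> X = X1 + X2" "(C1 = C2 \<and> Y = 0) \<or> Y = Y1 + Y2"
    for G1 G2 C1 C2 X1 X2 Y1 Y2 X Y
  proof -
    have key: "pdist ?I p (S.st g1 c1) (S.st g2 c2) \<le> (X + S.Lm * Y) / (1 - S.Lm)"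
      if "g1 \<in> G1" "g2 \<in> G2" "c1 \<in> C1" "c2 \<in> C2" "G1 = G2 \<and> X = 0 \<longrightarrow> g1 = g2" "C1 = C2 \<and> Y = 0 \<longrightarrow> c1 = c2"
      for g1 g2 c1 c2
    proof -
      have "pdist ?I p (S.st g1 c1) (S.st g2 c2) \<le> (pnorm ?I p (\<lambda>t. g1 t - g2 t) + S.Lm * pnorm ?I p (\<lambda>t. c1 t - c2 t)) / (1 - S.Lm)"
        unfolding pdist_def by (rule S.st_st) (use that G1 G2 C1 C2 in auto)
      also have "\<dots> \<le> (X + S.Lm * Y) / (1 - S.Lm)"
      proof (intro divm add_mono mult_left_mono Lg)
        show "pnorm ?I p (\<lambda>t. g1 t - g2 t) \<le> X"
          using XY(1) that S.pnorm_self S.diff_bound[of g1 g2 X1 X2] G1 G2 by auto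
        show "pnorm ?I p (\<lambda>t. c1 t - c2 t) \<le> Y"
          using XY(2) that S.pnorm_self S.diff_bound[of c1 c2 Y1 Y2] C1 C2 by auto
      qed
      finally show ?thesis .
    qed
    show ?thesis
    proof (rule hdist_le[OF SSne[OF G1(1) C1(1)] SSne[OF G2(1) C2(1)] dpos])
      fix h assume "h \<in> SS G1 C1"
      then obtain g1 c1 where h: "h = S.st g1 c1" "g1 \<in> G1" "c1 \<in> C1" unfolding SS_def by blast
      obtain g2 where g2: "g2 \<in> G2" "G1 = G2 \<and> X = 0 \<longrightarrow> g1 = g2" using G2(1) h(2) by blast
      obtain c2 where c2: "c2 \<in> C2" "C1 = C2 \<and> Y = 0 \<longrightarrow> c1 = c2" using C2(1) h(3) by blast
      show "\<exists>k\<in>SS G2 C2. pdist ?I p h k \<le> (X + S.Lm * Y) / (1 - S.Lm)"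
        using key[OF h(2) g2(1) h(3) c2(1) g2(2) c2(2)] h g2 c2 unfolding SS_def by blast
    next
      fix k assume "k \<in> SS G2 C2"
      then obtain g2 c2 where k: "k = S.st g2 c2" "g2 \<in> G2" "c2 \<in> C2" unfolding SS_def by blast
      obtain g1 where g1: "g1 \<in> G1" "G1 = G2 \<and> X = 0 \<longrightarrow> g1 = g2" using G1(1) k(2) by blast
      obtain c1 where c1: "c1 \<in> C1" "C1 = C2 \<and> Y = 0 \<longrightarrow> c1 = c2" using C1(1) k(3) by blast
      show "\<exists>h\<in>SS G1 C1. pdist ?I p h k \<le> (X + S.Lm * Y) / (1 - S.Lm)"
        using key[OF g1(1) k(2) c1(1) k(3) g1(2) c1(2)] k g1 c1 unfolding SS_def by blast
    qed
  qed
  have i5: "hdist (pdist ?I p) (SS F B) (SS F' B) \<le> 1 / (1 - S.Lm) * (MF + MF')"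
    using gen[OF assms(6) FL MF assms(7) F'L MF' assms(8) BL MB assms(8) BL MB, of "MF + MF'" 0] by simp
  have i6: "hdist (pdist ?I p) (SS F B) (SS F B') \<le> S.Lm / (1 - S.Lm) * (MB + MB')"
    using gen[OF assms(6) FL MF assms(6) FL MF assms(8) BL MB assms(9) B'L MB', of 0 "MB + MB'"] by simp
  have i7: "hdist (pdist ?I p) (SS F B) (SS F' B') \<le> 1 / (1 - S.Lm) * ((MF + MF') + S.Lm * (MB + MB'))"
    using gen[OF assms(6) FL MF assms(7) F'L MF' assms(8) BL MB assms(9) B'L MB', of "MF + MF'" "MB + MB'"] by simp
  show ?thesis
    unfolding Let_def \<Lambda> SS_def[symmetric]
    using i1 i2 i3 i4 i5 i6 i7 by blast
qed

end
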